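(* $\widehat{\mathsf{C}^{\mathrm{cof}}_{\boldsymbol{\Sigma}^1_1,\mathbb{N}}}\le_{\mathrm{sW}} \mathsf{wFindHS}_{\boldsymbol{\Pi}^0_1}$.
   Context: Strong Weihrauch reducibility: $f\le_{\mathrm{sW}} g$ iff there are computable $\Phi,\Psi$ on Baire space such that $\Psi\circ G\circ\Phi$ realizes $f$ for every realizer $G$ of $g$. $\mathsf{C}^{\mathrm{cof}}_{\boldsymbol{\Sigma}^1_1,\mathbb{N}}$ is the partial multivalued function which, given a nonempty cofinite $\boldsymbol{\Sigma}^1_1$ subset $A\subseteq\mathbb{N}$ (named by a name of a closed set $C\subseteq\mathbb{N}\times\mathbb{N}^\mathbb{N}$ whose projection to $\mathbb{N}$ is $A$), returns an element of $A$. For a multivalued $f$, its parallelization $\widehat{f}$ maps a sequence $(x_n)_{n\in\mathbb{N}}$ of inputs of $f$ to the set of sequences $(y_n)_n$ with $y_n\in f(x_n)$ for all $n$. The Ramsey space $[\mathbb{N}]^\mathbb{N}$ is the set of strictly increasing functions $\mathbb{N}\to\mathbb{N}$ with Baire-space topology; $fg=f\circ g$. For $P\subseteq[\mathbb{N}]^\mathbb{N}$, $f$ is homogeneous for $P$ if either $fg\in P$ for all $g\in[\mathbb{N}]^\mathbb{N}$ or $fg\notin P$ for all $g$; $\mathrm{HS}(P)$ is the set of homogeneous solutions. Open sets of $[\mathbb{N}]^\mathbb{N}$ are named by enumerations of sets of finite strictly increasing strings whose cones have union the set. $\mathsf{wFindHS}_{\boldsymbol{\Pi}^0_1}$: input an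 open $P$ with $\mathrm{HS}(P)\cap P=\emptyset$, output any element of $\mathrm{HS}(P)\setminus P$. *)

theory Defs
  imports Main "HOL-Library.Nat_Bijection"
begin

datatype recf = Z | S | Id nat | Cn recf "recf list" | Pr recf recf | Mn recf

inductive ev :: "recf \<Rightarrow> nat list \<Rightarrow> nat \<Rightarrow> bool" where
  ev_Z: "ev Z xs 0"
| ev_S: "ev S (x # xs) (Suc x)"
| ev_Id: "i < length xs \<Longrightarrow> ev (Id i) xs (xs ! i)"
| ev_Cn: "list_all2 (\<lambda>g y. ev g xs y) gs ys \<Longrightarrow> ev f ys y \<Longrightarrow> ev (Cn f gs) xs y"
| ev_Pr0: "ev f xs y \<Longrightarrow> ev (Pr f g) (0 # xs) y"
| ev_PrS: "ev (Pr f g) (n # xs) z \<Longrightarrow> ev g (n # z # xs) y \<Longrightarrow> ev (Pr f g) (Suc n # xs) y"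
| ev_Mn: "ev f (y # xs) 0 \<Longrightarrow> (\<forall>k<y. \<exists>v. 0 < v \<and> ev f (k # xs) v) \<Longrightarrow> ev (Mn f) xs y"

definition pref :: "(nat \<Rightarrow> nat) \<Rightarrow> nat \<Rightarrow> nat" where
  "pref p k = list_encode (map p [0..<k])"

text \<open>Phi restricted to D is computable: a total recursive M reads finite prefixes of the
  input; for output position n, the first prefix on which M answers Suc v determines v
  (answer 0 means "not yet").  This is equivalent to Phi|D having a computable
  partial extension (type-2 computability).\<close>
definition computable_on :: "(nat \<Rightarrow> nat) set \<Rightarrow> ((nat \<Rightarrow> nat) \<Rightarrow> (nat \<Rightarrow> nat)) \<Rightarrow> bool" where
  "computable_on D Phi \<longleftrightarrow> (\<exists>M. (\<forall>a b. \<exists>v. ev M [a, b] v) \<and>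
     (\<forall>p\<in>D. \<forall>n. \<exists>k. ev M [pref p k, n] (Suc (Phi p n)) \<and> (\<forall>j<k. ev M [pref p j, n] 0)))"

text \<open>A problem is given on the level of names: a set of admissible input names and a
  relation saying which output names are correct for an input name.\<close>
definition realizes :: "(nat \<Rightarrow> nat) set \<Rightarrow> ((nat \<Rightarrow> nat) \<Rightarrow> (nat \<Rightarrow> nat) \<Rightarrow> bool)
    \<Rightarrow> ((nat \<Rightarrow> nat) \<Rightarrow> (nat \<Rightarrow> nat)) \<Rightarrow> bool" where
  "realizes D sol G \<longleftrightarrow> (\<forall>q\<in>D. sol q (G q))"

definition sW_le :: "(nat \<Rightarrow> nat) set \<Rightarrow> ((nat \<Rightarrow> nat) \<Rightarrow> (nat \<Rightarrow> nat) \<Rightarrow> bool)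
    \<Rightarrow> (nat \<Rightarrow> nat) set \<Rightarrow> ((nat \<Rightarrow> nat) \<Rightarrow> (nat \<Rightarrow> nat) \<Rightarrow> bool) \<Rightarrow> bool" where
  "sW_le domf solf domg solg \<longleftrightarrow> (\<exists>Phi Psi.
     computable_on domf Phi \<and>
     computable_on {G (Phi p) |G p. realizes domg solg G \<and> p \<in> domf} Psi \<and>
     (\<forall>G. realizes domg solg G \<longrightarrow> realizes domf solf (\<lambda>p. Psi (G (Phi p)))))"

definition is_prefix :: "nat list \<Rightarrow> (nat \<Rightarrow> nat) \<Rightarrow> bool" where
  "is_prefix \<sigma> x \<longleftrightarrow> map x [0..<length \<sigma>] = \<sigma>"

text \<open>Closed subsets of N x N^N by negative information: name p enumerates (value 0 = skip,
  value Suc c = basic open set {m} x [\<sigma>] with (m, \<sigma>) = decode c) the complement.\<close>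
definition closed_of :: "(nat \<Rightarrow> nat) \<Rightarrow> (nat \<times> (nat \<Rightarrow> nat)) set" where
  "closed_of p = {(m, x). \<forall>k c. p k = Suc c \<longrightarrow>
       \<not> (fst (prod_decode c) = m \<and> is_prefix (list_decode (snd (prod_decode c))) x)}"

definition sigma11_of :: "(nat \<Rightarrow> nat) \<Rightarrow> nat set" where
  "sigma11_of p = {m. \<exists>x. (m, x) \<in> closed_of p}"

text \<open>Admissible input names of C^cof_{Sigma11,N}: names of closed C whose projection
  A is nonempty and cofinite; solutions are the elements of A.\<close>
definition Ccof_dom :: "(nat \<Rightarrow> nat) set" where
  "Ccof_dom = {p. sigma11_of p \<noteq> {} \<and> finite (- sigma11_of p)}"

text \<open>Parallelization: the input name p encodes the sequence of names
  p_i = (\<lambda>n. p (prod_encode (i, n))); an output sequence of naturals is named by itself.\<close>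
definition component :: "(nat \<Rightarrow> nat) \<Rightarrow> nat \<Rightarrow> (nat \<Rightarrow> nat)" where
  "component p i = (\<lambda>n. p (prod_encode (i, n)))"

definition par_Ccof_dom :: "(nat \<Rightarrow> nat) set" where
  "par_Ccof_dom = {p. \<forall>i. component p i \<in> Ccof_dom}"

definition par_Ccof_sol :: "(nat \<Rightarrow> nat) \<Rightarrow> (nat \<Rightarrow> nat) \<Rightarrow> bool" where
  "par_Ccof_sol p y \<longleftrightarrow> (\<forall>i. y i \<in> sigma11_of (component p i))"

definition ramsey :: "(nat \<Rightarrow> nat) set" where
  "ramsey = {f. strict_mono f}"

definition homogeneous :: "(nat \<Rightarrow> nat) set \<Rightarrow> (nat \<Rightarrow> nat) \<Rightarrow> bool" where
  "homogeneous P f \<longleftrightarrow> (\<forall>g\<in>ramsey. f \<circ> g \<in> P) \<or> (\<forall>g\<in>ramsey. f \<circ> g \<notin> P)"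

definition HS :: "(nat \<Rightarrow> nat) set \<Rightarrow> (nat \<Rightarrow> nat) set" where
  "HS P = {f \<in> ramsey. homogeneous P f}"

text \<open>Open subsets of the Ramsey space: name q enumerates (0 = skip, Suc c = string
  list_decode c) a set of finite strictly increasing strings; the set is the union of cones.\<close>
definition valid_open_name :: "(nat \<Rightarrow> nat) \<Rightarrow> bool" where
  "valid_open_name q \<longleftrightarrow> (\<forall>k c. q k = Suc c \<longrightarrow> sorted_wrt (<) (list_decode c))"

definition open_of :: "(nat \<Rightarrow> nat) \<Rightarrow> (nat \<Rightarrow> nat) set" where
  "open_of q = {f \<in> ramsey. \<exists>k c. q k = Suc c \<and> is_prefix (list_decode c) f}"

text \<open>Elements of the Ramsey space are named by themselves.\<close>
definition wFindHS_dom :: "(nat \<Rightarrow> nat) set" where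
  "wFindHS_dom = {q. valid_open_name q \<and> HS (open_of q) \<inter> open_of q = {}}"

definition wFindHS_sol :: "(nat \<Rightarrow> nat) \<Rightarrow> (nat \<Rightarrow> nat) \<Rightarrow> bool" where
  "wFindHS_sol q f \<longleftrightarrow> f \<in> HS (open_of q) - open_of q"

end

theory Submission
  imports Defs
begin

definition rt :: "nat \<Rightarrow> (nat list \<Rightarrow> nat) \<Rightarrow> bool" where
  "rt n F \<longleftrightarrow> (\<exists>M. \<forall>xs. length xs = n \<longrightarrow> ev M xs (F xs))"

lemma rt_cong: "rt n F \<Longrightarrow> (\<And>xs. length xs = n \<Longrightarrow> F xs = G xs) \<Longrightarrow> rt n G"
  unfolding rt_def by metis

lemma rt_proj: "i < n \<Longrightarrow> rt n (\<lambda>xs. xs ! i)"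
  unfolding rt_def by (intro exI[of _ "Id i"]) (auto intro: ev_Id)

lemma rt_zero: "rt n (\<lambda>_. 0)"
  unfolding rt_def by (intro exI[of _ Z]) (auto intro: ev_Z)

lemma rt_suc: assumes "rt n F" shows "rt n (\<lambda>xs. Suc (F xs))"
proof -
  obtain M where M: "\<forall>xs. length xs = n \<longrightarrow> ev M xs (F xs)" using assms rt_def by auto
  show ?thesis unfolding rt_def
  proof (intro exI[of _ "Cn S [M]"] allI impI)
    fix xs :: "nat list" assume "length xs = n"
    then have "list_all2 (\<lambda>g y. ev g xs y) [M] [F xs]" using M by auto
    moreover have "ev S [F xs] (Suc (F xs))" by (rule ev_S)
    ultimately show "ev (Cn S [M]) xs (Suc (F xs))" by (rule ev_Cn)
  qed
qed

lemma rt_const: "rt n (\<lambda>_. c)"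
  by (induction c) (auto intro: rt_zero rt_suc)

lemma rt_list_ex:
  assumes "\<forall>G\<in>set Gs. rt n G"
  shows "\<exists>Ms. list_all2 (\<lambda>G M. \<forall>xs. length xs = n \<longrightarrow> ev M xs (G xs)) Gs Ms"
  using assms
proof (induction Gs)
  case Nil then show ?case by auto
next
  case (Cons G Gs)
  then obtain Ms where "list_all2 (\<lambda>G M. \<forall>xs. length xs = n \<longrightarrow> ev M xs (G xs)) Gs Ms" by auto
  moreover obtain M where "\<forall>xs. length xs = n \<longrightarrow> ev M xs (G xs)" using Cons.prems rt_def by auto
  ultimately show ?case by (intro exI[of _ "M # Ms"]) auto
qed

lemma rt_comp:
  assumes "rt (length Gs) F" "\<forall>G\<in>set Gs. rt n G"
  shows "rt n (\<lambda>xs. F (map (\<lambda>G. G xs) Gs))"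
proof -
  obtain MF where MF: "\<forall>ys. length ys = length Gs \<longrightarrow> ev MF ys (F ys)" using assms(1) rt_def by auto
  obtain Ms where Ms: "list_all2 (\<lambda>G M. \<forall>xs. length xs = n \<longrightarrow> ev M xs (G xs)) Gs Ms"
    using rt_list_ex[OF assms(2)] by auto
  show ?thesis unfolding rt_def
  proof (intro exI[of _ "Cn MF Ms"] allI impI)
    fix xs :: "nat list" assume L: "length xs = n"
    have "list_all2 (\<lambda>g y. ev g xs y) Ms (map (\<lambda>G. G xs) Gs)"
      using Ms L by (induction Gs Ms rule: list_all2_induct) auto
    moreover have "ev MF (map (\<lambda>G. G xs) Gs) (F (map (\<lambda>G. G xs) Gs))" using MF by simp
    ultimately show "ev (Cn MF Ms) xs (F (map (\<lambda>G. G xs) Gs))" by (rule ev_Cn)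
  qed
qed

lemma rt_comp1: "rt 1 F \<Longrightarrow> rt n A \<Longrightarrow> rt n (\<lambda>xs. F [A xs])"
  using rt_comp[of "[A]" F n] by simp
lemma rt_comp2: "rt 2 F \<Longrightarrow> rt n A \<Longrightarrow> rt n B \<Longrightarrow> rt n (\<lambda>xs. F [A xs, B xs])"
  using rt_comp[of "[A, B]" F n] by (simp add: numeral_2_eq_2)
lemma rt_comp3: "rt 3 F \<Longrightarrow> rt n A \<Longrightarrow> rt n B \<Longrightarrow> rt n D \<Longrightarrow> rt n (\<lambda>xs. F [A xs, B xs, D xs])"
  using rt_comp[of "[A, B, D]" F n] by (simp add: numeral_3_eq_3)

lemma ev_Pr_rec:
  assumes f: "\<forall>xs. length xs = n \<longrightarrow> ev f xs (B xs)"
    and g: "\<forall>ys. length ys = Suc (Suc n) \<longrightarrow> ev g ys (St ys)"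
    and L: "length xs = n"
  shows "ev (Pr f g) (i # xs) (rec_nat (B xs) (\<lambda>i acc. St (i # acc # xs)) i)"
proof (induction i)
  case 0 then show ?case using f L by (auto intro: ev_Pr0)
next
  case (Suc i)
  then show ?case using g L by (auto intro: ev_PrS)
qed

lemma rt_pr:
  assumes "rt n B" "rt (Suc (Suc n)) St"
  shows "rt (Suc n) (\<lambda>ys. rec_nat (B (tl ys)) (\<lambda>i acc. St (i # acc # tl ys)) (hd ys))"
proof -
  obtain f where f: "\<forall>xs. length xs = n \<longrightarrow> ev f xs (B xs)" using assms(1) rt_def by auto
  obtain g where g: "\<forall>ys. length ys = Suc (Suc n) \<longrightarrow> ev g ys (St ys)" using assms(2) rt_def by auto
  show ?thesis unfolding rt_def
  proof (intro exI[of _ "Pr f g"] allI impI)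
    fix ys :: "nat list" assume "length ys = Suc n"
    then obtain i xs where ys: "ys = i # xs" "length xs = n" by (cases ys) auto
    show "ev (Pr f g) ys (rec_nat (B (tl ys)) (\<lambda>i acc. St (i # acc # tl ys)) (hd ys))"
      using ev_Pr_rec[OF f g ys(2)] ys by simp
  qed
qed

lemma map_nth_eq: "length xs = n \<Longrightarrow> map ((\<lambda>G. G xs) \<circ> (\<lambda>j ys. ys ! j)) [0..<n] = xs"
  by (drule sym) (simp add: comp_def map_nth)

lemma rt_rec:
  assumes N: "rt n N" and B: "rt n B" and St: "rt (Suc (Suc n)) St"
  shows "rt n (\<lambda>xs. rec_nat (B xs) (\<lambda>i acc. St (i # acc # xs)) (N xs))"
proof -
  have P: "rt (Suc n) (\<lambda>ys. rec_nat (B (tl ys)) (\<lambda>i acc. St (i # acc # tl ys)) (hd ys))"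
    by (rule rt_pr[OF B St])
  let ?Gs = "N # map (\<lambda>j ys. ys ! j) [0..<n]"
  have "rt (length ?Gs) (\<lambda>ys. rec_nat (B (tl ys)) (\<lambda>i acc. St (i # acc # tl ys)) (hd ys))"
    using P by simp
  moreover have "\<forall>G\<in>set ?Gs. rt n G" using N by (auto intro: rt_proj)
  ultimately have "rt n (\<lambda>xs. (\<lambda>ys. rec_nat (B (tl ys)) (\<lambda>i acc. St (i # acc # tl ys)) (hd ys)) (map (\<lambda>G. G xs) ?Gs))"
    by (rule rt_comp)
  then show ?thesis
    by (rule rt_cong) (simp add: map_nth_eq)
qed

lemma tv_simps[simp]: "(0 < (if b then 1 else (0::nat))) = b" "((if b then 1 else (0::nat)) \<noteq> 0) = b"
  "((if b then 1 else (0::nat)) = 0) = (\<not> b)" "(0 < (if b then Suc 0 else 0)) = b"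
  by auto

lemma rt_add2: "rt 2 (\<lambda>xs. xs ! 0 + xs ! 1)"
proof -
  have r: "rt 2 (\<lambda>xs. rec_nat (xs ! 1) (\<lambda>i acc. (\<lambda>ys. Suc (ys ! 1)) (i # acc # xs)) (xs ! 0))"
    by (rule rt_rec) (auto intro!: rt_proj rt_suc)
  have e: "rec_nat y (\<lambda>i acc. Suc acc) x = x + y" for x y :: nat by (induction x) auto
  show ?thesis apply (rule rt_cong[OF r]) using e by simp
qed

lemma rt_add: "rt n F \<Longrightarrow> rt n G \<Longrightarrow> rt n (\<lambda>xs. F xs + G xs)"
  using rt_comp2[OF rt_add2] by simp

lemma rt_mult2: "rt 2 (\<lambda>xs. xs ! 0 * xs ! 1)"
proof -
  have r: "rt 2 (\<lambda>xs. rec_nat 0 (\<lambda>i acc. (\<lambda>ys. ys ! 1 + ys ! 3) (i # acc # xs)) (xs ! 0))"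
    by (rule rt_rec) (auto intro!: rt_proj rt_add rt_const)
  have e: "rec_nat 0 (\<lambda>i acc. acc + y) x = x * y" for x y :: nat by (induction x) auto
  show ?thesis apply (rule rt_cong[OF r]) using e by (auto simp: numeral_eq_Suc length_Suc_conv)
qed

lemma rt_mult: "rt n F \<Longrightarrow> rt n G \<Longrightarrow> rt n (\<lambda>xs. F xs * G xs)"
  using rt_comp2[OF rt_mult2] by simp

lemma rt_pred1: "rt 1 (\<lambda>xs. xs ! 0 - 1)"
proof -
  have r: "rt 1 (\<lambda>xs. rec_nat 0 (\<lambda>i acc. (\<lambda>ys. ys ! 0) (i # acc # xs)) (xs ! 0))"
    by (rule rt_rec) (auto intro!: rt_proj rt_const)
  have e: "rec_nat 0 (\<lambda>i acc. i) x = x - 1" for x :: nat by (induction x) auto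
  show ?thesis apply (rule rt_cong[OF r]) using e by simp
qed

lemma rt_sub2: "rt 2 (\<lambda>xs. xs ! 0 - xs ! 1)"
proof -
  have r: "rt 2 (\<lambda>xs. rec_nat (xs ! 0) (\<lambda>i acc. (\<lambda>ys. ys ! 1 - 1) (i # acc # xs)) (xs ! 1))"
    by (rule rt_rec) (auto intro!: rt_proj rt_comp1[OF rt_pred1, where A="\<lambda>ys. ys ! 1", simplified])
  have e: "rec_nat x (\<lambda>i acc. acc - 1) y = x - y" for x y :: nat by (induction y) auto
  show ?thesis apply (rule rt_cong[OF r]) using e by simp
qed

lemma rt_sub: "rt n F \<Longrightarrow> rt n G \<Longrightarrow> rt n (\<lambda>xs. F xs - G xs)"
  using rt_comp2[OF rt_sub2] by simp

lemma rt_if3: "rt 3 (\<lambda>xs. if xs ! 0 \<noteq> 0 then xs ! 1 else xs ! 2)"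
proof -
  have r: "rt 3 (\<lambda>xs. rec_nat (xs ! 2) (\<lambda>i acc. (\<lambda>ys. ys ! 3) (i # acc # xs)) (xs ! 0))"
    by (rule rt_rec) (auto intro!: rt_proj)
  have e: "rec_nat z (\<lambda>i acc. y) x = (if x \<noteq> 0 then y else z)" for x y z :: nat
    by (cases x) auto
  show ?thesis apply (rule rt_cong[OF r]) using e by (auto simp: numeral_eq_Suc length_Suc_conv)
qed

lemma rt_if:
  assumes "rt n C" "rt n F" "rt n G"
  shows "rt n (\<lambda>xs. if C xs \<noteq> 0 then F xs else G xs)"
proof -
  have r: "rt n (\<lambda>xs. (\<lambda>ys. if ys ! 0 \<noteq> 0 then ys ! 1 else ys ! 2) [C xs, F xs, G xs])"
    by (rule rt_comp3[OF rt_if3 assms])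
  show ?thesis apply (rule rt_cong[OF r]) by (simp add: numeral_eq_Suc)
qed

lemma rt_less: "rt n F \<Longrightarrow> rt n G \<Longrightarrow> rt n (\<lambda>xs. if F xs < G xs then 1 else 0)"
proof -
  assume "rt n F" "rt n G"
  then have "rt n (\<lambda>xs. if G xs - F xs \<noteq> 0 then 1 else 0)"
    by (intro rt_if rt_sub rt_const)
  then show ?thesis by (rule rt_cong) auto
qed

primrec bmin :: "nat \<Rightarrow> (nat \<Rightarrow> bool) \<Rightarrow> nat" where
  "bmin 0 Q = 0"
| "bmin (Suc i) Q = (if bmin i Q < i then bmin i Q else if Q i then i else Suc i)"

lemma bmin_le: "bmin N Q \<le> N"
  by (induction N) auto

lemma bmin_eq: "bmin N Q = (if \<exists>i<N. Q i then (LEAST i. Q i) else N)"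
proof (induction N)
  case 0 then show ?case by simp
next
  case (Suc N)
  show ?case
  proof (cases "\<exists>i<N. Q i")
    case True
    then obtain i where i: "i < N" "Q i" by blast
    have "(LEAST i. Q i) \<le> i" using i(2) by (rule Least_le)
    then have "(LEAST i. Q i) < N" using i(1) by linarith
    moreover have "\<exists>i<Suc N. Q i" using i less_SucI by blast
    ultimately show ?thesis using Suc True by simp
  next
    case False
    have b: "bmin N Q = N" using Suc.IH by (simp only: False if_False)
    show ?thesis
    proof (cases "Q N")
      case True
      have "(LEAST i. Q i) = N"
        by (rule Least_equality) (use False True in \<open>auto simp: not_less\<close>)
      then show ?thesis using b True by auto
    next
      case F2: False
      have nn: "(\<exists>i<Suc N. Q i) = False" using False F2 less_Suc_eq by auto
      show ?thesis unfolding nn if_False using b F2 by simp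
    qed
  qed
qed

lemma rt_bmin:
  assumes N: "rt n N" and P: "rt (Suc n) P"
  shows "rt n (\<lambda>xs. bmin (N xs) (\<lambda>i. P (i # xs) \<noteq> 0))"
proof -
  have P': "rt (Suc (Suc n)) (\<lambda>ys. P (ys ! 0 # drop 2 ys))"
  proof -
    let ?Gs = "(\<lambda>ys. ys ! 0) # map (\<lambda>j ys. ys ! (j + 2)) [0..<n]"
    have "rt (length ?Gs) P" using P by simp
    moreover have "\<forall>G\<in>set ?Gs. rt (Suc (Suc n)) G" by (auto intro!: rt_proj)
    ultimately have r: "rt (Suc (Suc n)) (\<lambda>ys. P (map (\<lambda>G. G ys) ?Gs))" by (rule rt_comp)
    have e: "map (\<lambda>G. G ys) ?Gs = ys ! 0 # drop 2 ys" if "length ys = Suc (Suc n)" for ys :: "nat list"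
      using that by (intro nth_equalityI) (auto simp: nth_Cons split: nat.splits)
    show ?thesis apply (rule rt_cong[OF r]) using e by simp
  qed
  have St: "rt (Suc (Suc n)) (\<lambda>ys. if (if ys ! 1 < ys ! 0 then 1 else 0::nat) \<noteq> 0 then ys ! 1
      else if P (ys ! 0 # drop 2 ys) \<noteq> 0 then ys ! 0 else Suc (ys ! 0))"
    by (intro rt_if rt_less rt_proj rt_suc P') auto
  have r: "rt n (\<lambda>xs. rec_nat 0 (\<lambda>i acc. (\<lambda>ys. if (if ys ! 1 < ys ! 0 then 1 else 0::nat) \<noteq> 0 then ys ! 1
      else if P (ys ! 0 # drop 2 ys) \<noteq> 0 then ys ! 0 else Suc (ys ! 0)) (i # acc # xs)) (N xs))"
    by (rule rt_rec[OF N rt_const St])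
  have e: "rec_nat 0 (\<lambda>i acc. if acc < i then acc else if Q i then i else Suc i) x = bmin x Q"
    for x Q by (induction x) auto
  show ?thesis apply (rule rt_cong[OF r]) apply (simp add: numeral_2_eq_2 cong: if_cong) by (rule e)
qed

datatype ex = Var nat | Cst nat | Plus ex ex | Minus ex ex | Times ex ex | Cond ex ex ex
  | Less ex ex | Rc ex ex ex | Bmin ex ex | App1 ex ex | App2 ex ex ex | App3 ex ex ex ex

primrec eval :: "ex \<Rightarrow> nat list \<Rightarrow> nat" where
  "eval (Var i) xs = xs ! i"
| "eval (Cst c) xs = c"
| "eval (Plus a b) xs = eval a xs + eval b xs"
| "eval (Minus a b) xs = eval a xs - eval b xs"
| "eval (Times a b) xs = eval a xs * eval b xs"
| "eval (Cond c a b) xs = (if eval c xs \<noteq> 0 then eval a xs else eval b xs)"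
| "eval (Less a b) xs = (if eval a xs < eval b xs then 1 else 0)"
| "eval (Rc N b s) xs = rec_nat (eval b xs) (\<lambda>i acc. eval s (i # acc # xs)) (eval N xs)"
| "eval (Bmin N P) xs = bmin (eval N xs) (\<lambda>i. eval P (i # xs) \<noteq> 0)"
| "eval (App1 f a) xs = eval f [eval a xs]"
| "eval (App2 f a b) xs = eval f [eval a xs, eval b xs]"
| "eval (App3 f a b c) xs = eval f [eval a xs, eval b xs, eval c xs]"

primrec wfe :: "nat \<Rightarrow> ex \<Rightarrow> bool" where
  "wfe n (Var i) = (i < n)"
| "wfe n (Cst c) = True"
| "wfe n (Plus a b) = (wfe n a \<and> wfe n b)"
| "wfe n (Minus a b) = (wfe n a \<and> wfe n b)"
| "wfe n (Times a b) = (wfe n a \<and> wfe n b)"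
| "wfe n (Cond c a b) = (wfe n c \<and> wfe n a \<and> wfe n b)"
| "wfe n (Less a b) = (wfe n a \<and> wfe n b)"
| "wfe n (Rc N b s) = (wfe n N \<and> wfe n b \<and> wfe (Suc (Suc n)) s)"
| "wfe n (Bmin N P) = (wfe n N \<and> wfe (Suc n) P)"
| "wfe n (App1 f a) = (wfe 1 f \<and> wfe n a)"
| "wfe n (App2 f a b) = (wfe 2 f \<and> wfe n a \<and> wfe n b)"
| "wfe n (App3 f a b c) = (wfe 3 f \<and> wfe n a \<and> wfe n b \<and> wfe n c)"

theorem rt_eval: "wfe n e \<Longrightarrow> rt n (eval e)"
proof (induction e arbitrary: n)
  case (Var i) then show ?case by (simp add: rt_proj)
next
  case (Cst c) then show ?case by (simp add: rt_const)
next
  case (Plus a b) then show ?case by (simp add: rt_add)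
next
  case (Minus a b) then show ?case by (simp add: rt_sub)
next
  case (Times a b) then show ?case by (simp add: rt_mult)
next
  case (Cond c a b) then show ?case using rt_if[of n "eval c" "eval a" "eval b"] by simp
next
  case (Less a b) then show ?case using rt_less[of n "eval a" "eval b"] by simp
next
  case (Rc N b s) then show ?case using rt_rec[of n "eval N" "eval b" "eval s"] by simp
next
  case (Bmin N P) then show ?case using rt_bmin[of n "eval N" "eval P"] by simp
next
  case (App1 f a) then show ?case using rt_comp1[of "eval f" n "eval a"] by simp
next
  case (App2 f a b) then show ?case using rt_comp2[of "eval f" n "eval a" "eval b"] by simp
next
  case (App3 f a b c) then show ?case using rt_comp3[of "eval f" n "eval a" "eval b" "eval c"] by simp
qed

definition "NotE a = Cond a (Cst 0) (Cst 1)"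
definition "AndE a b = Cond a (Cond b (Cst 1) (Cst 0)) (Cst 0)"
definition "ImpE a b = Cond a (Cond b (Cst 1) (Cst 0)) (Cst 1)"
definition "LeE a b = NotE (Less b a)"
definition "EqE a b = AndE (LeE a b) (LeE b a)"
definition "BexE N P = Less (Bmin N P) N"
definition "BallE N P = NotE (BexE N (NotE P))"

definition holds :: "ex \<Rightarrow> nat list \<Rightarrow> bool" where "holds e xs \<longleftrightarrow> eval e xs \<noteq> 0"

lemma eval_Cond2[simp]: "eval (Cond c a b) xs = (if holds c xs then eval a xs else eval b xs)"
  by (simp add: holds_def)
lemma eval_Bmin2[simp]: "eval (Bmin N P) xs = bmin (eval N xs) (\<lambda>i. holds P (i # xs))"
  by (simp add: holds_def)
declare eval.simps(6)[simp del] eval.simps(9)[simp del]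

lemma bmin_less: "bmin N Q < N \<longleftrightarrow> (\<exists>i<N. Q i)"
proof -
  have "(\<exists>i<N. Q i) \<Longrightarrow> (LEAST i. Q i) < N"
    by (meson Least_le le_less_trans)
  then show ?thesis by (auto simp: bmin_eq)
qed

lemma holds_simps[simp]:
  "holds (NotE a) xs \<longleftrightarrow> \<not> holds a xs"
  "holds (AndE a b) xs \<longleftrightarrow> holds a xs \<and> holds b xs"
  "holds (ImpE a b) xs \<longleftrightarrow> (holds a xs \<longrightarrow> holds b xs)"
  "holds (Less a b) xs \<longleftrightarrow> eval a xs < eval b xs"
  "holds (LeE a b) xs \<longleftrightarrow> eval a xs \<le> eval b xs"
  "holds (EqE a b) xs \<longleftrightarrow> eval a xs = eval b xs"
  "holds (BexE N P) xs \<longleftrightarrow> (\<exists>i<eval N xs. holds P (i # xs))"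
  "holds (BallE N P) xs \<longleftrightarrow> (\<forall>i<eval N xs. holds P (i # xs))"
  by (auto simp: holds_def NotE_def AndE_def ImpE_def LeE_def EqE_def BexE_def BallE_def bmin_less)

lemma wfe_simps[simp]:
  "wfe n (NotE a) = wfe n a" "wfe n (AndE a b) = (wfe n a \<and> wfe n b)"
  "wfe n (ImpE a b) = (wfe n a \<and> wfe n b)"
  "wfe n (LeE a b) = (wfe n a \<and> wfe n b)" "wfe n (EqE a b) = (wfe n a \<and> wfe n b)"
  "wfe n (BexE N P) = (wfe n N \<and> wfe (Suc n) P)" "wfe n (BallE N P) = (wfe n N \<and> wfe (Suc n) P)"
  by (auto simp: NotE_def AndE_def ImpE_def LeE_def EqE_def BexE_def BallE_def)

definition "TRI = Rc (Var 0) (Cst 0) (Plus (Var 1) (Plus (Var 0) (Cst 1)))"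
definition "PDK = Bmin (Plus (Var 0) (Cst 1)) (Less (Var 1) (App1 TRI (Plus (Var 0) (Cst 1))))"
definition "PD1 = Minus (Var 0) (App1 TRI (App1 PDK (Var 0)))"
definition "PD2 = Minus (App1 PDK (Var 0)) (App1 PD1 (Var 0))"
definition "HD = App1 PD1 (Minus (Var 0) (Cst 1))"
definition "TL = App1 PD2 (Minus (Var 0) (Cst 1))"
definition "TLK = Rc (Var 1) (Var 0) (App1 TL (Var 1))"
definition "NTH = App1 HD (App2 TLK (Var 0) (Var 1))"
definition "LEN = Bmin (Plus (Var 0) (Cst 1)) (EqE (App2 TLK (Var 1) (Var 0)) (Cst 0))"

lemma wfe_macros[simp]: "wfe 1 TRI" "wfe 1 PDK" "wfe 1 PD1" "wfe 1 PD2" "wfe 1 HD" "wfe 1 TL"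
  "wfe 2 TLK" "wfe 2 NTH" "wfe 1 LEN"
  by (simp_all add: TRI_def PDK_def PD1_def PD2_def HD_def TL_def TLK_def NTH_def LEN_def)

lemma eval_TRI[simp]: "eval TRI [x] = triangle x"
proof -
  have "rec_nat 0 (\<lambda>i acc. acc + (i + 1)) x = triangle x" by (induction x) auto
  then show ?thesis by (simp add: TRI_def)
qed


lemma pdk_prop:
  fixes c :: nat
  defines "k \<equiv> LEAST k. c < triangle (Suc k)"
  shows "eval PDK [c] = k" "triangle k \<le> c" "c < triangle k + Suc k"
proof -
  have ex: "c < triangle (Suc c)" by (induction c) auto
  have kl: "c < triangle (Suc k)" unfolding k_def using ex by (rule LeastI)
  have "k \<le> c" unfolding k_def using ex by (rule Least_le)
  then have "\<exists>i<c+1. c < triangle (Suc i)" using kl by auto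
  then show "eval PDK [c] = k" by (simp add: PDK_def eval_TRI bmin_eq k_def)
  show "c < triangle k + Suc k" using kl by simp
  show "triangle k \<le> c"
  proof (cases k)
    case 0 then show ?thesis by simp
  next
    case (Suc k')
    then have "k' < k" by simp
    then have "\<not> c < triangle (Suc k')" unfolding k_def by (rule not_less_Least)
    then show ?thesis using Suc by simp
  qed
qed

lemma eval_PD[simp]: "eval PD1 [c] = fst (prod_decode c)" "eval PD2 [c] = snd (prod_decode c)"
proof -
  define k where "k = (LEAST k. c < triangle (Suc k))"
  note P = pdk_prop[of c, folded k_def]
  define x where "x = c - triangle k"
  have c: "c = triangle k + x" and xk: "x \<le> k" using P x_def by auto
  have "prod_decode c = (x, k - x)"
    using c xk by (simp add: prod_decode_triangle_add prod_decode_aux.simps)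
  moreover have "eval PD1 [c] = x" using P by (simp add: PD1_def x_def)
  moreover then have "eval PD2 [c] = k - x" using P by (simp add: PD2_def)
  ultimately show "eval PD1 [c] = fst (prod_decode c)" "eval PD2 [c] = snd (prod_decode c)" by auto
qed


lemma list_decode_Suc: "list_decode (Suc n) = fst (prod_decode n) # list_decode (snd (prod_decode n))"
  by (simp add: split_beta)

lemma eval_TL: "eval TL [c] = list_encode (tl (list_decode c))"
proof (cases c)
  case 0 then show ?thesis by (simp add: TL_def prod_decode_def prod_decode_aux.simps)
next
  case (Suc n) then show ?thesis by (simp add: TL_def list_decode_Suc del: list_decode.simps)
qed

lemma eval_HD: "c \<noteq> 0 \<Longrightarrow> eval HD [c] = hd (list_decode c)"
  by (cases c) (auto simp: HD_def list_decode_Suc simp del: list_decode.simps)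

lemma eval_TLK: "eval TLK [c, i] = list_encode (drop i (list_decode c))"
proof -
  have "rec_nat c (\<lambda>i acc. eval TL [acc]) i = list_encode (drop i (list_decode c))"
    by (induction i) (auto simp: eval_TL drop_Suc tl_drop)
  then show ?thesis by (simp add: TLK_def)
qed

lemma list_encode_0: "list_encode xs = 0 \<longleftrightarrow> xs = []"
  by (cases xs) auto

lemma eval_NTH: "i < length (list_decode c) \<Longrightarrow> eval NTH [c, i] = list_decode c ! i"
  by (simp add: NTH_def eval_TLK eval_HD list_encode_0 hd_drop_conv_nth)

lemma length_le_encode: "length xs \<le> list_encode xs"
proof (induction xs)
  case Nil then show ?case by simp
next
  case (Cons x xs)
  have "list_encode xs \<le> prod_encode (x, list_encode xs)" by (rule le_prod_encode_2)
  then show ?case using Cons by simp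
qed

lemma eval_LEN: "eval LEN [c] = length (list_decode c)"
proof -
  have le: "length (list_decode c) \<le> c" using length_le_encode[of "list_decode c"] by simp
  have "(LEAST i. drop i (list_decode c) = []) = length (list_decode c)"
    by (rule Least_equality) auto
  then show ?thesis using le
    by (auto simp: LEN_def eval_TLK bmin_eq list_encode_0 intro!: exI[of _ "length (list_decode c)"])
qed

declare eval_LEN[simp] eval_TLK[simp] eval_NTH[simp]

lemma wfe_macros1[simp]: "wfe (Suc 0) TRI" "wfe (Suc 0) PDK" "wfe (Suc 0) PD1" "wfe (Suc 0) PD2"
  "wfe (Suc 0) HD" "wfe (Suc 0) TL" "wfe (Suc 0) LEN"
  using wfe_macros by simp_all

lemma holds_App[simp]: "holds (App1 f a) xs = holds f [eval a xs]"
  "holds (App2 f a b) xs = holds f [eval a xs, eval b xs]"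
  "holds (App3 f a b c) xs = holds f [eval a xs, eval b xs, eval c xs]"
  by (simp_all add: holds_def)

definition pref_ok :: "nat list \<Rightarrow> nat list \<Rightarrow> bool" where
  "pref_ok \<tau> \<sigma> \<longleftrightarrow> length \<tau> \<le> length \<sigma> \<and> (\<forall>j<length \<tau>. \<tau> ! j = \<sigma> ! j)"

definition bnd :: "nat list \<Rightarrow> nat list \<Rightarrow> bool" where
  "bnd \<sigma> \<beta> \<longleftrightarrow> length \<sigma> = length \<beta> \<and> (\<forall>j<length \<sigma>. \<sigma> ! j \<le> \<beta> ! j)"

definition covers :: "nat \<Rightarrow> nat \<Rightarrow> nat list \<Rightarrow> bool" where
  "covers v m \<sigma> \<longleftrightarrow> 0 < v \<and> fst (prod_decode (v - 1)) = m \<and>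
     pref_ok (list_decode (snd (prod_decode (v - 1)))) \<sigma>"

definition "PREFX = AndE (LeE (App1 LEN (Var 0)) (App1 LEN (Var 1)))
  (BallE (App1 LEN (Var 0)) (EqE (App2 NTH (Var 1) (Var 0)) (App2 NTH (Var 2) (Var 0))))"
definition "COVM = AndE (Less (Cst 0) (Var 0)) (AndE (EqE (App1 PD1 (Minus (Var 0) (Cst 1))) (Var 1))
  (App2 PREFX (App1 PD2 (Minus (Var 0) (Cst 1))) (Var 2)))"
definition "BNDM = AndE (EqE (App1 LEN (Var 0)) (App1 LEN (Var 1)))
  (BallE (App1 LEN (Var 0)) (LeE (App2 NTH (Var 1) (Var 0)) (App2 NTH (Var 2) (Var 0))))"
definition "SORTED = BallE (Minus (App1 LEN (Var 2)) (Cst 1))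
  (Less (App2 NTH (Var 3) (Var 0)) (App2 NTH (Var 3) (Plus (Var 0) (Cst 1))))"
definition "REF = BexE (App1 LEN (Var 2)) (BallE (Plus (App2 TLK (Var 3) (Plus (Var 0) (Cst 1))) (Cst 1))
  (ImpE (App2 BNDM (Var 0) (App2 TLK (Var 4) (Plus (Var 1) (Cst 1))))
    (BexE (Var 3) (AndE (EqE (App1 PD1 (Var 0)) (Var 2))
       (App3 COVM (App2 NTH (Var 3) (Var 0)) (App2 NTH (Var 5) (Var 2)) (Var 1))))))"
definition "CHK = AndE SORTED REF"
definition "FE = App3 (Cond CHK (Plus (Var 2) (Cst 1)) (Cst 0)) (Var 0) (App1 PD1 (Var 1)) (App1 PD2 (Var 1))"
definition "MFE = Cond (Less (App1 LEN (Var 0)) (App1 PD1 (Var 1))) (Cst 0) (Plus FE (Cst 1))"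
definition "PSIE = Cond (Less (Var 1) (App1 LEN (Var 0))) (Plus (App2 NTH (Var 0) (Var 1)) (Cst 1)) (Cst 0)"

lemma wfe_big: "wfe 2 MFE" "wfe 2 PSIE"
  by (simp_all add: MFE_def FE_def CHK_def SORTED_def REF_def BNDM_def COVM_def PREFX_def PSIE_def)

lemma holds_PREFX: "holds PREFX [a, b] \<longleftrightarrow> pref_ok (list_decode a) (list_decode b)"
  by (auto simp: PREFX_def pref_ok_def)

lemma holds_COVM: "holds COVM [v, m, u] \<longleftrightarrow> covers v m (list_decode u)"
  by (auto simp: COVM_def covers_def holds_PREFX)

lemma holds_BNDM: "holds BNDM [u, b] \<longleftrightarrow> bnd (list_decode u) (list_decode b)"
  by (auto simp: BNDM_def bnd_def)

lemma holds_SORTED: "holds SORTED [a, t, list_encode s] \<longleftrightarrow> sorted_wrt (<) s"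
proof -
  have "holds SORTED [a, t, list_encode s] \<longleftrightarrow> (\<forall>i. Suc i < length s \<longrightarrow> s ! i < s ! Suc i)"
    by (auto simp: SORTED_def less_diff_conv)
  also have "\<dots> \<longleftrightarrow> sorted_wrt (<) s"
    by (rule sorted_wrt_iff_nth_Suc_transp[symmetric]) (auto simp: transp_def)
  finally show ?thesis .
qed

lemma tri_mono: "a \<le> b \<Longrightarrow> triangle a \<le> triangle b"
proof (induction b)
  case 0 then show ?case by simp
next
  case (Suc b) then show ?case by (cases "a = Suc b") auto
qed

lemma prod_encode_mono: "a \<le> a' \<Longrightarrow> b \<le> b' \<Longrightarrow> prod_encode (a, b) \<le> prod_encode (a', b')"
  unfolding prod_encode_def using tri_mono[of "a + b" "a' + b'"] by simp

lemma bnd_encode_le: "bnd \<sigma> \<beta> \<Longrightarrow> list_encode \<sigma> \<le> list_encode \<beta>"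
proof (induction \<beta> arbitrary: \<sigma>)
  case Nil then show ?case by (simp add: bnd_def)
next
  case (Cons b \<beta>)
  then obtain x \<sigma>' where s: "\<sigma> = x # \<sigma>'" by (cases \<sigma>) (auto simp: bnd_def)
  have "bnd \<sigma>' \<beta>" using Cons.prems s by (fastforce simp: bnd_def)
  then have "list_encode \<sigma>' \<le> list_encode \<beta>" by (rule Cons.IH)
  moreover have "x \<le> b" using Cons.prems s by (force simp: bnd_def)
  ultimately show ?case using s by (simp add: prod_encode_mono)
qed

lemma holds_REF1:
  assumes "t \<le> length L"
  shows "holds REF [list_encode L, t, list_encode s] \<longleftrightarrow>
    (\<exists>i<length s. \<forall>u<list_encode (drop (Suc i) s) + 1. bnd (list_decode u) (drop (Suc i) s) \<longrightarrow>
       (\<exists>e<t. fst (prod_decode e) = i \<and> covers (L ! e) (s ! i) (list_decode u)))"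
  using assms by (auto simp: REF_def holds_COVM holds_BNDM cong: conj_cong)

lemma holds_REF:
  assumes "t \<le> length L"
  shows "holds REF [list_encode L, t, list_encode s] \<longleftrightarrow>
    (\<exists>i<length s. \<forall>\<sigma>. bnd \<sigma> (drop (Suc i) s) \<longrightarrow>
       (\<exists>e<t. fst (prod_decode e) = i \<and> covers (L ! e) (s ! i) \<sigma>))"
  unfolding holds_REF1[OF assms]
proof (intro ex_cong1 conj_cong refl iffI allI impI)
  fix i \<sigma>
  assume A: "\<forall>u<list_encode (drop (Suc i) s) + 1. bnd (list_decode u) (drop (Suc i) s) \<longrightarrow>
       (\<exists>e<t. fst (prod_decode e) = i \<and> covers (L ! e) (s ! i) (list_decode u))"
    and B: "bnd \<sigma> (drop (Suc i) s)"
  have "list_encode \<sigma> < list_encode (drop (Suc i) s) + 1" using bnd_encode_le[OF B] by simp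
  then show "\<exists>e<t. fst (prod_decode e) = i \<and> covers (L ! e) (s ! i) \<sigma>" using A B by fastforce
qed auto

lemma holds_CHK:
  assumes "t \<le> length L"
  shows "holds CHK [list_encode L, t, list_encode s] \<longleftrightarrow> sorted_wrt (<) s \<and>
    (\<exists>i<length s. \<forall>\<sigma>. bnd \<sigma> (drop (Suc i) s) \<longrightarrow>
       (\<exists>e<t. fst (prod_decode e) = i \<and> covers (L ! e) (s ! i) \<sigma>))"
  using holds_REF[OF assms] holds_SORTED by (simp add: CHK_def)

definition PhiF :: "(nat \<Rightarrow> nat) \<Rightarrow> nat \<Rightarrow> nat" where
  "PhiF p n = eval FE [pref p (fst (prod_decode n)), n]"

lemma list_decode_pref[simp]: "list_decode (pref p k) = map p [0..<k]"
  by (simp add: pref_def)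

lemma PhiF_eq: "PhiF p n = (let t = fst (prod_decode n); s = list_decode (snd (prod_decode n)) in
   if sorted_wrt (<) s \<and> (\<exists>i<length s. \<forall>\<sigma>. bnd \<sigma> (drop (Suc i) s) \<longrightarrow>
       (\<exists>e<t. fst (prod_decode e) = i \<and> covers (p e) (s ! i) \<sigma>))
   then Suc (snd (prod_decode n)) else 0)"
proof -
  define t where "t = fst (prod_decode n)"
  define c where "c = snd (prod_decode n)"
  have "holds CHK [pref p t, t, c] \<longleftrightarrow> holds CHK [list_encode (map p [0..<t]), t, list_encode (list_decode c)]"
    by (simp add: pref_def)
  also have "\<dots> \<longleftrightarrow> sorted_wrt (<) (list_decode c) \<and> (\<exists>i<length (list_decode c). \<forall>\<sigma>. bnd \<sigma> (drop (Suc i) (list_decode c)) \<longrightarrow>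
       (\<exists>e<t. fst (prod_decode e) = i \<and> covers (map p [0..<t] ! e) (list_decode c ! i) \<sigma>))"
    by (rule holds_CHK) simp
  also have "\<dots> \<longleftrightarrow> sorted_wrt (<) (list_decode c) \<and> (\<exists>i<length (list_decode c). \<forall>\<sigma>. bnd \<sigma> (drop (Suc i) (list_decode c)) \<longrightarrow>
       (\<exists>e<t. fst (prod_decode e) = i \<and> covers (p e) (list_decode c ! i) \<sigma>))"
    by (intro conj_cong refl ex_cong1 all_cong1 imp_cong) (auto cong: conj_cong)
  finally have H: "holds CHK [pref p t, t, c] \<longleftrightarrow> \<dots>" .
  show ?thesis unfolding PhiF_def FE_def using H by (simp add: t_def[symmetric] c_def[symmetric] Let_def) blast
qed

lemma computable_Phi: "computable_on D PhiF"
proof -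
  obtain M where M: "\<forall>xs. length xs = 2 \<longrightarrow> ev M xs (eval MFE xs)"
    using rt_eval[OF wfe_big(1)] rt_def by auto
  show ?thesis unfolding computable_on_def
  proof (intro exI[of _ M] conjI ballI allI)
    fix a b show "\<exists>v. ev M [a, b] v" using M[rule_format, of "[a, b]"] by auto
  next
    fix p :: "nat \<Rightarrow> nat" and n
    let ?t = "fst (prod_decode n)"
    have "eval MFE [pref p ?t, n] = Suc (PhiF p n)" by (simp add: MFE_def PhiF_def)
    moreover have "j < ?t \<Longrightarrow> eval MFE [pref p j, n] = 0" for j by (simp add: MFE_def)
    ultimately show "\<exists>k. ev M [pref p k, n] (Suc (PhiF p n)) \<and> (\<forall>j<k. ev M [pref p j, n] 0)"
      using M by (intro exI[of _ ?t]) (metis length_Cons list.size(3) numeral_2_eq_2)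
  qed
qed

lemma computable_Psi: "computable_on D (\<lambda>f. f)"
proof -
  obtain M where M: "\<forall>xs. length xs = 2 \<longrightarrow> ev M xs (eval PSIE xs)"
    using rt_eval[OF wfe_big(2)] rt_def by auto
  show ?thesis unfolding computable_on_def
  proof (intro exI[of _ M] conjI ballI allI)
    fix a b show "\<exists>v. ev M [a, b] v" using M[rule_format, of "[a, b]"] by auto
  next
    fix p :: "nat \<Rightarrow> nat" and n
    have "eval PSIE [pref p (Suc n), n] = Suc (p n)" by (simp add: PSIE_def nth_append)
    moreover have "j < Suc n \<Longrightarrow> eval PSIE [pref p j, n] = 0" for j by (simp add: PSIE_def)
    ultimately show "\<exists>k. ev M [pref p k, n] (Suc (p n)) \<and> (\<forall>j<k. ev M [pref p j, n] 0)"
      using M by (intro exI[of _ "Suc n"]) (metis length_Cons list.size(3) numeral_2_eq_2)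
  qed
qed

lemma konig:
  fixes b :: "nat \<Rightarrow> nat" and Q :: "nat list \<Rightarrow> bool"
  assumes down: "\<And>\<sigma> k. Q \<sigma> \<Longrightarrow> k \<le> length \<sigma> \<Longrightarrow> Q (take k \<sigma>)"
    and bounded: "\<And>\<sigma> j. Q \<sigma> \<Longrightarrow> j < length \<sigma> \<Longrightarrow> \<sigma> ! j \<le> b j"
    and all: "\<And>k. \<exists>\<sigma>. Q \<sigma> \<and> length \<sigma> = k"
  shows "\<exists>x. \<forall>k. Q (map x [0..<k])"
proof -
  define good where "good \<sigma> \<longleftrightarrow> (\<forall>k\<ge>length \<sigma>. \<exists>\<sigma>'. Q \<sigma>' \<and> length \<sigma>' = k \<and> take (length \<sigma>) \<sigma>' = \<sigma>)" for \<sigma>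
  have g0: "good []" unfolding good_def using all by auto
  have step: "\<exists>v. good (\<sigma> @ [v])" if G: "good \<sigma>" for \<sigma>
  proof (rule ccontr)
    assume "\<nexists>v. good (\<sigma> @ [v])"
    then have "\<forall>v. \<exists>k\<ge>Suc (length \<sigma>). \<not> (\<exists>\<sigma>'. Q \<sigma>' \<and> length \<sigma>' = k \<and> take (Suc (length \<sigma>)) \<sigma>' = \<sigma> @ [v])"
      unfolding good_def by auto
    then obtain kf where kf: "\<And>v. kf v \<ge> Suc (length \<sigma>)"
      "\<And>v. \<not> (\<exists>\<sigma>'. Q \<sigma>' \<and> length \<sigma>' = kf v \<and> take (Suc (length \<sigma>)) \<sigma>' = \<sigma> @ [v])"
      by metis
    define K where "K = Max (kf ` {..b (length \<sigma>)})"
    have K1: "kf v \<le> K" if "v \<le> b (length \<sigma>)" for v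
      unfolding K_def using that by (intro Max_ge) auto
    have "K \<ge> length \<sigma>" using K1[of 0] kf(1)[of 0] by simp
    then obtain \<sigma>' where s': "Q \<sigma>'" "length \<sigma>' = K" "take (length \<sigma>) \<sigma>' = \<sigma>"
      using G unfolding good_def by blast
    define v where "v = \<sigma>' ! length \<sigma>"
    have lt: "length \<sigma> < K" using K1[of 0] kf(1)[of 0] by simp
    have vb: "v \<le> b (length \<sigma>)" unfolding v_def using bounded[OF s'(1)] s'(2) lt by simp
    have kK: "kf v \<le> K" using K1[OF vb] .
    have Qt: "Q (take (kf v) \<sigma>')" using down[OF s'(1)] kK s'(2) by simp
    have "take (Suc (length \<sigma>)) \<sigma>' = \<sigma> @ [v]"
      using s' lt unfolding v_def by (simp add: take_Suc_conv_app_nth)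
    then have TT: "take (Suc (length \<sigma>)) (take (kf v) \<sigma>') = \<sigma> @ [v]"
      using kf(1)[of v] by (simp add: min_def)
    have L: "length (take (kf v) \<sigma>') = kf v" using kK s'(2) by simp
    show False using kf(2)[of v] Qt L TT by blast
  qed
  define nxt where "nxt \<sigma> = \<sigma> @ [SOME v. good (\<sigma> @ [v])]" for \<sigma>
  define seq where "seq n = (nxt ^^ n) []" for n
  have nxt_good: "good (nxt \<sigma>)" if G2: "good \<sigma>" for \<sigma>
  proof -
    obtain v where "good (\<sigma> @ [v])" using step[OF G2] by blast
    then show ?thesis unfolding nxt_def by (rule someI)
  qed
  have seq_good: "good (seq n)" for n
  proof (induction n)
    case 0 then show ?case using g0 by (simp add: seq_def)
  next
    case (Suc n)
    have "seq (Suc n) = nxt (seq n)" by (simp add: seq_def)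
    then show ?case using nxt_good[OF Suc] by simp
  qed
  have seq_len: "length (seq n) = n" for n
    by (induction n) (simp_all add: seq_def nxt_def)
  have seq_Suc: "seq (Suc n) = seq n @ [seq (Suc n) ! n]" for n
    using seq_len[of n] by (simp add: seq_def nxt_def nth_append)
  define x where "x j = seq (Suc j) ! j" for j
  have seq_eq: "seq k = map x [0..<k]" for k
  proof (induction k)
    case 0 then show ?case by (simp add: seq_def)
  next
    case (Suc k)
    then show ?case using seq_Suc[of k] by (simp add: x_def)
  qed
  have "Q \<sigma>" if G3: "good \<sigma>" for \<sigma>
  proof -
    obtain \<sigma>' where "Q \<sigma>'" "length \<sigma>' = length \<sigma>" "take (length \<sigma>) \<sigma>' = \<sigma>"
      using G3 unfolding good_def by blast
    then show ?thesis by simp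
  qed
  then show ?thesis using seq_good seq_eq by metis
qed

lemma notcov:
  assumes "(m, x) \<in> closed_of (component p i)"
  shows "\<not> (fst (prod_decode e) = i \<and> covers (p e) m (map x [0..<k]))"
proof
  assume A: "fst (prod_decode e) = i \<and> covers (p e) m (map x [0..<k])"
  define r where "r = snd (prod_decode e)"
  have e: "e = prod_encode (i, r)" using A unfolding r_def by (metis prod.collapse prod_decode_inverse)
  define c where "c = p e - 1"
  have pe: "p e = Suc c" using A unfolding c_def covers_def by simp
  have cr: "component p i r = Suc c" using pe e by (simp add: component_def)
  define \<tau> where "\<tau> = list_decode (snd (prod_decode c))"
  have fm: "fst (prod_decode c) = m" and po: "pref_ok \<tau> (map x [0..<k])"
    using A unfolding covers_def c_def \<tau>_def by auto
  have "is_prefix \<tau> x" unfolding is_prefix_def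
  proof (rule nth_equalityI)
    show "length (map x [0..<length \<tau>]) = length \<tau>" by simp
    fix j assume "j < length (map x [0..<length \<tau>])"
    then show "map x [0..<length \<tau>] ! j = \<tau> ! j" using po unfolding pref_ok_def by auto
  qed
  then show False using assms cr fm unfolding closed_of_def \<tau>_def by auto
qed

lemma finite_bnd: "finite {\<sigma>. bnd \<sigma> \<beta>}"
proof -
  have sub: "{\<sigma>. bnd \<sigma> \<beta>} \<subseteq> {xs. set xs \<subseteq> {..sum_list \<beta>} \<and> length xs = length \<beta>}"
  proof
    fix \<sigma> assume "\<sigma> \<in> {\<sigma>. bnd \<sigma> \<beta>}"
    then have B: "bnd \<sigma> \<beta>" by simp
    have "set \<sigma> \<subseteq> {..sum_list \<beta>}"
    proof
      fix y assume y: "y \<in> set \<sigma>"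
      then obtain j where j: "j < length \<sigma>" "y = \<sigma> ! j" by (auto simp: in_set_conv_nth)
      then have "y \<le> \<beta> ! j" using B by (auto simp: bnd_def)
      also have "\<beta> ! j \<le> sum_list \<beta>" using j B by (intro elem_le_sum_list) (auto simp: bnd_def)
      finally show "y \<in> {..sum_list \<beta>}" by simp
    qed
    then show "\<sigma> \<in> {xs. set xs \<subseteq> {..sum_list \<beta>} \<and> length xs = length \<beta>}" using B by (simp add: bnd_def)
  qed
  have fin: "finite {xs. set xs \<subseteq> {..sum_list \<beta>} \<and> length xs = length \<beta>}"
    by (rule finite_lists_length_eq) simp
  from sub fin show ?thesis by (rule finite_subset)
qed

lemma uniform_bound:
  fixes P :: "'a \<Rightarrow> nat \<Rightarrow> bool"
  assumes "finite SS" "\<forall>\<sigma>\<in>SS. \<exists>e. P \<sigma> e"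
  shows "\<exists>t. \<forall>\<sigma>\<in>SS. \<exists>e<t. P \<sigma> e"
proof -
  define g where "g \<sigma> = (SOME e. P \<sigma> e)" for \<sigma>
  have "P \<sigma> (g \<sigma>)" if "\<sigma> \<in> SS" for \<sigma> using assms(2) that unfolding g_def by (metis someI_ex)
  moreover have "g \<sigma> < Suc (Max (g ` SS))" if "\<sigma> \<in> SS" for \<sigma>
    using assms(1) that by (simp add: le_imp_less_Suc)
  ultimately show ?thesis by blast
qed

lemma map_upt_shift: "map f [a..<a + k] = map (\<lambda>j. f (a + j)) [0..<k]"
  by (induction k) auto

lemma notP_in_A:
  assumes f: "f \<in> ramsey" and nP: "f \<notin> open_of (PhiF p)"
  shows "f i \<in> sigma11_of (component p i)"
proof (rule ccontr)
  assume nA: "f i \<notin> sigma11_of (component p i)"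
  define b where "b j = f (Suc i + j)" for j
  define cov where "cov \<sigma> \<longleftrightarrow> (\<exists>e. fst (prod_decode e) = i \<and> covers (p e) (f i) \<sigma>)" for \<sigma>
  have "\<exists>k. \<forall>\<sigma>. bnd \<sigma> (map b [0..<k]) \<longrightarrow> cov \<sigma>"
  proof (rule ccontr)
    assume "\<not> ?thesis"
    then have all: "\<forall>k. \<exists>\<sigma>. bnd \<sigma> (map b [0..<k]) \<and> \<not> cov \<sigma>" by blast
    define Q where "Q \<sigma> \<longleftrightarrow> bnd \<sigma> (map b [0..<length \<sigma>]) \<and> \<not> cov \<sigma>" for \<sigma>
    have down: "Q (take k \<sigma>)" if "Q \<sigma>" "k \<le> length \<sigma>" for \<sigma> k
    proof -
      have "bnd (take k \<sigma>) (map b [0..<length (take k \<sigma>)])"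
        using that unfolding Q_def bnd_def by (auto simp: min_def)
      moreover have "\<not> cov (take k \<sigma>)"
      proof
        assume "cov (take k \<sigma>)"
        then have "cov \<sigma>" unfolding cov_def covers_def pref_ok_def by auto
        then show False using that unfolding Q_def by simp
      qed
      ultimately show ?thesis unfolding Q_def by simp
    qed
    have bounded: "\<sigma> ! j \<le> b j" if "Q \<sigma>" "j < length \<sigma>" for \<sigma> j
      using that unfolding Q_def bnd_def by auto
    have allQ: "\<exists>\<sigma>. Q \<sigma> \<and> length \<sigma> = k" for k
    proof -
      obtain \<sigma> where s1: "bnd \<sigma> (map b [0..<k])" "\<not> cov \<sigma>" using all by blast
      then have "length \<sigma> = k" by (simp add: bnd_def)
      then show ?thesis using s1 unfolding Q_def by blast
    qed
    obtain x where x: "\<forall>k. Q (map x [0..<k])" using konig[OF down bounded allQ] by blast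
    have "(f i, x) \<in> closed_of (component p i)"
      unfolding closed_of_def
    proof (clarify)
      fix r c
      assume rc: "component p i r = Suc c" "fst (prod_decode c) = f i"
        "is_prefix (list_decode (snd (prod_decode c))) x"
      define \<tau> where "\<tau> = list_decode (snd (prod_decode c))"
      have "cov (map x [0..<length \<tau>])" unfolding cov_def
      proof (intro exI[of _ "prod_encode (i, r)"] conjI)
        show "fst (prod_decode (prod_encode (i, r))) = i" by simp
        show "covers (p (prod_encode (i, r))) (f i) (map x [0..<length \<tau>])"
          using rc unfolding covers_def component_def pref_ok_def \<tau>_def is_prefix_def by auto
      qed
      then show False using x unfolding Q_def by auto
    qed
    then show False using nA unfolding sigma11_of_def by auto
  qed
  then obtain k where k: "\<forall>\<sigma>. bnd \<sigma> (map b [0..<k]) \<longrightarrow> cov \<sigma>" by blast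
  obtain t where t: "\<forall>\<sigma>\<in>{\<sigma>. bnd \<sigma> (map b [0..<k])}. \<exists>e<t. fst (prod_decode e) = i \<and> covers (p e) (f i) \<sigma>"
    using uniform_bound[OF finite_bnd, of "map b [0..<k]" "\<lambda>\<sigma> e. fst (prod_decode e) = i \<and> covers (p e) (f i) \<sigma>"]
      k unfolding cov_def by auto
  define s where "s = map f [0..<Suc i + k]"
  define n where "n = prod_encode (t, list_encode s)"
  have sm: "strict_mono f" using f unfolding ramsey_def by simp
  have sorted: "sorted_wrt (<) s" unfolding s_def sorted_wrt_iff_nth_less
    using sm by (auto simp del: upt_Suc simp: strict_mono_less)
  have dr: "drop (Suc i) s = map b [0..<k]"
    unfolding s_def b_def using map_upt_shift[of f "Suc i" k] by (simp del: upt_Suc add: drop_map)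
  have si: "s ! i = f i" unfolding s_def by (simp del: upt_Suc add: nth_map_upt)
  have li: "i < length s" unfolding s_def by simp
  have ex: "\<exists>i'<length s. \<forall>\<sigma>. bnd \<sigma> (drop (Suc i') s) \<longrightarrow>
      (\<exists>e<t. fst (prod_decode e) = i' \<and> covers (p e) (s ! i') \<sigma>)"
    using li dr si t by (intro exI[of _ i]) auto
  have "PhiF p n = Suc (list_encode s)"
    unfolding PhiF_eq n_def Let_def using sorted ex by (simp del: upt_Suc)
  moreover have "is_prefix (list_decode (list_encode s)) f" unfolding is_prefix_def s_def by simp
  ultimately have "f \<in> open_of (PhiF p)" using f unfolding open_of_def by blast
  then show False using nP by simp
qed

lemma sum_mem_le: "(i::'a) \<in> A \<Longrightarrow> finite A \<Longrightarrow> (F i :: nat) \<le> sum F A"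
  by (rule member_le_sum) auto

lemma exists_avoid:
  assumes p: "p \<in> par_Ccof_dom" and f: "f \<in> ramsey"
  shows "\<exists>g\<in>ramsey. f \<circ> g \<notin> open_of (PhiF p)"
proof -
  define A where "A l = sigma11_of (component p l)" for l
  have "\<exists>N. \<forall>m\<ge>N. m \<in> A l" for l
  proof -
    have "finite (- A l)" using p unfolding par_Ccof_dom_def Ccof_dom_def A_def by auto
    then obtain N where "\<forall>n\<in>- A l. n < N" using finite_nat_set_iff_bounded by blast
    then show ?thesis by (intro exI[of _ N]) (auto simp: not_less[symmetric])
  qed
  then obtain NA where NA: "\<And>l m. NA l \<le> m \<Longrightarrow> m \<in> A l" by metis
  define wit where "wit l m = (SOME x. (m, x) \<in> closed_of (component p l))" for l m
  have wit_ok: "(m, wit l m) \<in> closed_of (component p l)" if mA: "m \<in> A l" for l m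
  proof -
    obtain x where "(m, x) \<in> closed_of (component p l)" using mA unfolding A_def sigma11_of_def by blast
    then show ?thesis unfolding wit_def by (rule someI[where P="\<lambda>x. (m, x) \<in> closed_of (component p l)"])
  qed
  define Bd where "Bd n v = (\<Sum>l\<le>n. \<Sum>m\<le>v. \<Sum>j\<le>Suc n. wit l m j)" for n v
  have Bd_ge: "wit l m j \<le> Bd n v" if "l \<le> n" "m \<le> v" "j \<le> Suc n" for l m j n v
  proof -
    have "wit l m j \<le> (\<Sum>j\<le>Suc n. wit l m j)" using that by (intro sum_mem_le) auto
    also have "\<dots> \<le> (\<Sum>m\<le>v. \<Sum>j\<le>Suc n. wit l m j)"
      using that by (intro sum_mem_le[where F="\<lambda>m. \<Sum>j\<le>Suc n. wit l m j"]) auto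
    also have "\<dots> \<le> Bd n v" unfolding Bd_def
      using that by (intro sum_mem_le[where F="\<lambda>l. \<Sum>m\<le>v. \<Sum>j\<le>Suc n. wit l m j"]) auto
    finally show ?thesis .
  qed
  define g where "g = rec_nat (NA 0) (\<lambda>n gn. Suc gn + NA (Suc n) + Bd n (f gn))"
  have g0: "g 0 = NA 0" and gS: "g (Suc n) = Suc (g n) + NA (Suc n) + Bd n (f (g n))" for n
    by (simp_all add: g_def)
  have sm: "strict_mono f" using f unfolding ramsey_def by simp
  have fge: "z \<le> f z" for z using sm by (rule strict_mono_imp_increasing)
  have gsm: "strict_mono g" unfolding strict_mono_Suc_iff using gS by simp
  define h where "h = f \<circ> g"
  have hsm: "strict_mono h" unfolding h_def using sm gsm by (simp add: strict_mono_def)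
  have gNA: "NA l \<le> g l" for l by (cases l) (simp_all add: g0 gS)
  have hA: "h l \<in> A l" for l
    using NA[of l "h l"] gNA[of l] fge[of "g l"] unfolding h_def by simp
  have hB: "Bd n (h n) \<le> h (Suc n)" for n
    using gS[of n] fge[of "g (Suc n)"] unfolding h_def by simp
  have hmono: "i \<le> n \<Longrightarrow> h i \<le> h n" for i n using hsm by (simp add: strict_mono_less_eq)
  have key: "wit i (h i) j \<le> h (Suc i + j)" for i j
  proof -
    have "wit i (h i) j \<le> Bd (i + j) (h (i + j))"
      by (rule Bd_ge) (auto intro: hmono)
    also have "\<dots> \<le> h (Suc (i + j))" by (rule hB)
    finally show ?thesis by simp
  qed
  have "h \<notin> open_of (PhiF p)"
  proof
    assume "h \<in> open_of (PhiF p)"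
    then obtain k c where kc: "PhiF p k = Suc c" "is_prefix (list_decode c) h"
      unfolding open_of_def by blast
    define s where "s = list_decode c"
    define t where "t = fst (prod_decode k)"
    have "c = snd (prod_decode k) \<and> (\<exists>i<length s. \<forall>\<sigma>. bnd \<sigma> (drop (Suc i) s) \<longrightarrow>
       (\<exists>e<t. fst (prod_decode e) = i \<and> covers (p e) (s ! i) \<sigma>))"
      using kc(1) unfolding PhiF_eq Let_def s_def t_def by (auto split: if_splits)
    then obtain i where i: "i < length s"
      "\<forall>\<sigma>. bnd \<sigma> (drop (Suc i) s) \<longrightarrow> (\<exists>e<t. fst (prod_decode e) = i \<and> covers (p e) (s ! i) \<sigma>)"
      by blast
    have s: "s = map h [0..<length s]" using kc(2) unfolding is_prefix_def s_def by simp
    have si: "s ! i = h i" using i(1) by (subst s) simp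
    define x where "x = wit i (h i)"
    have cl: "(h i, x) \<in> closed_of (component p i)" unfolding x_def by (rule wit_ok[OF hA])
    define \<sigma> where "\<sigma> = map x [0..<length s - Suc i]"
    have "bnd \<sigma> (drop (Suc i) s)"
      unfolding bnd_def
    proof (intro conjI allI impI)
      show "length \<sigma> = length (drop (Suc i) s)" by (simp add: \<sigma>_def)
      fix j assume j: "j < length \<sigma>"
      then have jl: "Suc i + j < length s" by (simp add: \<sigma>_def)
      have sn: "s ! n = h n" if "n < length s" for n using that by (subst s) simp
      have "drop (Suc i) s ! j = s ! (Suc i + j)" using jl by (simp add: nth_drop)
      then have "drop (Suc i) s ! j = h (Suc i + j)" using sn[OF jl] by simp
      moreover have "\<sigma> ! j = x j" using j by (simp add: \<sigma>_def)
      ultimately show "\<sigma> ! j \<le> drop (Suc i) s ! j" using key[of i j] unfolding x_def by simp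
    qed
    then obtain e where "fst (prod_decode e) = i" "covers (p e) (h i) \<sigma>" using i(2) si by auto
    then show False using notcov[OF cl, of e "length s - Suc i"] unfolding \<sigma>_def by simp
  qed
  moreover have "g \<in> ramsey" using gsm unfolding ramsey_def by simp
  ultimately show ?thesis unfolding h_def by blast
qed

lemma main_real:
  assumes G: "realizes wFindHS_dom wFindHS_sol G"
  shows "realizes par_Ccof_dom par_Ccof_sol (\<lambda>p. G (PhiF p))"
proof -
  show "realizes par_Ccof_dom par_Ccof_sol (\<lambda>p. G (PhiF p))"
    unfolding realizes_def
  proof
    fix p assume p: "p \<in> par_Ccof_dom"
    have valid: "valid_open_name (PhiF p)"
      unfolding valid_open_name_def
    proof (intro allI impI)
      fix k c assume "PhiF p k = Suc c"
      then show "sorted_wrt (<) (list_decode c)"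
        unfolding PhiF_eq Let_def by (auto split: if_splits)
    qed
    have disj: "HS (open_of (PhiF p)) \<inter> open_of (PhiF p) = {}"
    proof (rule ccontr)
      assume "HS (open_of (PhiF p)) \<inter> open_of (PhiF p) \<noteq> {}"
      then obtain f where f: "f \<in> HS (open_of (PhiF p))" "f \<in> open_of (PhiF p)" by blast
      have fr: "f \<in> ramsey" using f(1) unfolding HS_def by simp
      have idr: "id \<in> ramsey" unfolding ramsey_def by (simp add: strict_mono_def)
      have "homogeneous (open_of (PhiF p)) f" using f(1) unfolding HS_def by simp
      then show False unfolding homogeneous_def
      proof
        assume "\<forall>g\<in>ramsey. f \<circ> g \<in> open_of (PhiF p)"
        then show False using exists_avoid[OF p fr] by blast
      next
        assume "\<forall>g\<in>ramsey. f \<circ> g \<notin> open_of (PhiF p)"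
        then have "f \<circ> id \<notin> open_of (PhiF p)" using idr by blast
        then show False using f(2) by simp
      qed
    qed
    have "PhiF p \<in> wFindHS_dom" unfolding wFindHS_dom_def using valid disj by simp
    then have sol: "G (PhiF p) \<in> HS (open_of (PhiF p)) - open_of (PhiF p)"
      using G unfolding realizes_def wFindHS_sol_def by blast
    then have "G (PhiF p) \<in> ramsey" "G (PhiF p) \<notin> open_of (PhiF p)" unfolding HS_def by auto
    then show "par_Ccof_sol p (G (PhiF p))"
      unfolding par_Ccof_sol_def using notP_in_A by blast
  qed
qed

theorem mainTheorem6:
  shows "sW_le par_Ccof_dom par_Ccof_sol wFindHS_dom wFindHS_sol"
  unfolding sW_le_def
  by (intro exI[of _ PhiF] exI[of _ "\<lambda>f. f"] conjI computable_Phi computable_Psi allI impI main_real)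

end
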